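(* Let $\mu\ge1$. The language of pairs $(A,B)$ of sequences in $\{0,\dots,\mu\}^\omega$ (read synchronously as words over $\{0,\dots,\mu\}^2$) with $\mathrm{PLA}(A)\ge\mathrm{PLA}(B)$ is $\omega$-context-free, i.e. it is accepted by a B\"uchi pushdown automaton.
   Context: $\mathrm{Sum}(M[0,n-1])=\sum_{j=0}^{n-1}M[j]$. Prefix-average comparison: $\mathrm{PLA}(A)\ge\mathrm{PLA}(B)$ holds iff there are only finitely many indices $i$ with $\mathrm{Sum}(B[0,i-1])\ge\mathrm{Sum}(A[0,i-1])$ and infinitely many indices $i$ with $\mathrm{Sum}(A[0,i-1])>\mathrm{Sum}(B[0,i-1])$. A B\"uchi pushdown automaton is a finite-state automaton with a stack (finite stack alphabet, start symbol, transitions possibly on $\epsilon$ that read the top stack symbol and replace it), accepting an infinite word iff some run visits an accepting state infinitely often. *)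

theory Defs
  imports Main
begin

definition prefix_sum :: "(nat \<Rightarrow> nat) \<Rightarrow> nat \<Rightarrow> nat" where
  "prefix_sum M i = (\<Sum>j<i. M j)"

definition PLA_ge :: "(nat \<Rightarrow> nat) \<Rightarrow> (nat \<Rightarrow> nat) \<Rightarrow> bool" where
  "PLA_ge A B \<longleftrightarrow>
     finite {i. prefix_sum B i \<ge> prefix_sum A i} \<and>
     infinite {i. prefix_sum A i > prefix_sum B i}"

text \<open>A transition (p, x, Z, q, \<gamma>) means: in state p, reading x (None = epsilon) with
  top stack symbol Z, go to state q and replace Z by the word \<gamma> (head = new top).\<close>
type_synonym 'a pda_trans = "nat \<times> 'a option \<times> nat \<times> nat \<times> nat list"

definition pda_wf ::
  "nat set \<Rightarrow> nat set \<Rightarrow> 'a pda_trans set \<Rightarrow> nat \<Rightarrow> nat \<Rightarrow> nat set \<Rightarrow> bool" where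
  "pda_wf Q \<Gamma> \<delta> q0 Z0 F \<longleftrightarrow>
     finite Q \<and> finite \<Gamma> \<and> finite \<delta> \<and> q0 \<in> Q \<and> Z0 \<in> \<Gamma> \<and> F \<subseteq> Q \<and>
     (\<forall>(p, x, Z, q, \<gamma>) \<in> \<delta>. p \<in> Q \<and> Z \<in> \<Gamma> \<and> q \<in> Q \<and> set \<gamma> \<subseteq> \<Gamma>)"

text \<open>One step of a run on the infinite word w: configurations (state, stack, number of
  input letters read so far).\<close>
definition pda_step ::
  "'a pda_trans set \<Rightarrow> (nat \<Rightarrow> 'a) \<Rightarrow> nat \<times> nat list \<times> nat \<Rightarrow> nat \<times> nat list \<times> nat \<Rightarrow> bool" where
  "pda_step \<delta> w c c' \<longleftrightarrow>
     (case c of (p, stk, n) \<Rightarrow> case c' of (q, stk', n') \<Rightarrow>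
       (\<exists>Z rest \<gamma>. stk = Z # rest \<and> stk' = \<gamma> @ rest \<and>
          (((p, None, Z, q, \<gamma>) \<in> \<delta> \<and> n' = n) \<or>
           ((p, Some (w n), Z, q, \<gamma>) \<in> \<delta> \<and> n' = Suc n))))"

definition pda_buchi_accepts ::
  "'a pda_trans set \<Rightarrow> nat \<Rightarrow> nat \<Rightarrow> nat set \<Rightarrow> (nat \<Rightarrow> 'a) \<Rightarrow> bool" where
  "pda_buchi_accepts \<delta> q0 Z0 F w \<longleftrightarrow>
     (\<exists>r :: nat \<Rightarrow> nat \<times> nat list \<times> nat.
        r 0 = (q0, [Z0], 0) \<and>
        (\<forall>i. pda_step \<delta> w (r i) (r (Suc i))) \<and>
        (\<forall>m. \<exists>i. snd (snd (r i)) \<ge> m) \<and>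
        infinite {i. fst (r i) \<in> F})"

definition omega_context_free :: "(nat \<Rightarrow> 'a) set \<Rightarrow> bool" where
  "omega_context_free L \<longleftrightarrow>
     (\<exists>Q \<Gamma> \<delta> q0 Z0 F. pda_wf Q \<Gamma> (\<delta> :: 'a pda_trans set) q0 Z0 F \<and>
        L = {w. pda_buchi_accepts \<delta> q0 Z0 F w})"

end

theory Submission
  imports Defs
begin

definition upd :: "nat \<Rightarrow> int \<Rightarrow> int \<Rightarrow> nat \<Rightarrow> int \<times> nat list" where
  "upd \<mu> c \<Delta> Z = (let v = c + \<Delta>; M = int \<mu> in
     if Z = 1 then (if v > 2*M then (v - M, [1,1]) else if v < 1 then (v + M, []) else (v, [1]))
     else if Z = 2 then (if v < 1 - 2*M then (v + M, [2,2]) else if v > 0 then (v - M, []) else (v, [2]))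
     else (if v > 2*M then (v - M, [1,0]) else if v < 1 - 2*M then (v + M, [2,0]) else (v, [0])))"

definition cinv :: "nat \<Rightarrow> int \<Rightarrow> nat list \<Rightarrow> int \<Rightarrow> bool" where
  "cinv \<mu> c stk d \<longleftrightarrow> 1 - 2*int \<mu> \<le> c \<and> c \<le> 2*int \<mu> \<and>
     (\<exists>h. (stk = replicate h 1 @ [0] \<and> d = c + int \<mu> * int h \<and> (h > 0 \<longrightarrow> c \<ge> 1)) \<or>
          (stk = replicate h 2 @ [0] \<and> d = c - int \<mu> * int h \<and> (h > 0 \<longrightarrow> c \<le> 0)))"

lemma upd_range:
  assumes "\<mu> \<ge> 1" "1 - 2*int \<mu> \<le> c" "c \<le> 2*int \<mu>" "\<bar>\<Delta>\<bar> \<le> int \<mu>"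
  shows "1 - 2*int \<mu> \<le> fst (upd \<mu> c \<Delta> Z) \<and> fst (upd \<mu> c \<Delta> Z) \<le> 2*int \<mu>
         \<and> set (snd (upd \<mu> c \<Delta> Z)) \<subseteq> {0,1,2}"
  using assms unfolding upd_def Let_def by auto

lemma cinv_pos:
  assumes "cinv \<mu> c stk d"
  shows "c \<ge> 1 \<longleftrightarrow> d \<ge> 1"
proof -
  obtain h where "(stk = replicate h 1 @ [0] \<and> d = c + int \<mu> * int h \<and> (h > 0 \<longrightarrow> c \<ge> 1)) \<or>
          (stk = replicate h 2 @ [0] \<and> d = c - int \<mu> * int h \<and> (h > 0 \<longrightarrow> c \<le> 0))"
    using assms unfolding cinv_def by blast
  moreover obtain p where p: "p = int \<mu> * int h" "p \<ge> 0" by simp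
  ultimately have "(d = c + p \<and> (h > 0 \<longrightarrow> c \<ge> 1)) \<or> (d = c - p \<and> (h > 0 \<longrightarrow> c \<le> 0))" by auto
  moreover have "h = 0 \<Longrightarrow> p = 0" using p by simp
  ultimately show ?thesis using p(2) by (cases "h = 0") auto
qed

lemma cinv_ne: "cinv \<mu> c stk d \<Longrightarrow> stk \<noteq> [] \<and> hd stk \<in> {0,1,2}"
  unfolding cinv_def by (auto, (case_tac h; auto)+)

lemma upd_cinv:
  assumes mu: "\<mu> \<ge> 1" and I: "cinv \<mu> c (Z # rest) d" and D: "\<bar>\<Delta>\<bar> \<le> int \<mu>"
  shows "cinv \<mu> (fst (upd \<mu> c \<Delta> Z)) (snd (upd \<mu> c \<Delta> Z) @ rest) (d + \<Delta>)"
proof -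
  have r: "1 - 2*int \<mu> \<le> c" "c \<le> 2*int \<mu>" using I unfolding cinv_def by auto
  obtain h where H: "(Z # rest = replicate h 1 @ [0] \<and> d = c + int \<mu> * int h \<and> (h > 0 \<longrightarrow> c \<ge> 1)) \<or>
          (Z # rest = replicate h 2 @ [0] \<and> d = c - int \<mu> * int h \<and> (h > 0 \<longrightarrow> c \<le> 0))"
    using I unfolding cinv_def by blast
  show ?thesis
  proof (cases h)
    case 0
    then have Z: "Z = 0" "rest = []" "d = c" using H by auto
    show ?thesis
    proof -
      consider "c + \<Delta> > 2*int \<mu>" | "c + \<Delta> < 1 - 2*int \<mu>" | "1 - 2*int \<mu> \<le> c + \<Delta> \<and> c + \<Delta> \<le> 2*int \<mu>" by linarith
      then show ?thesis
      proof cases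
        case 1
        then show ?thesis using Z mu r D unfolding upd_def Let_def cinv_def
          by (auto intro!: exI[of _ 1])
      next
        case 2
        then show ?thesis using Z mu r D unfolding upd_def Let_def cinv_def
          by (auto intro!: exI[of _ 1])
      next
        case 3
        then show ?thesis using Z mu r D unfolding upd_def Let_def cinv_def
          by (auto intro!: exI[of _ 0])
      qed
    qed
  next
    case (Suc k)
    then have H': "(Z = 1 \<and> rest = replicate k 1 @ [0] \<and> d = c + int \<mu> * int k + int \<mu> \<and> c \<ge> 1) \<or>
          (Z = 2 \<and> rest = replicate k 2 @ [0] \<and> d = c - int \<mu> * int k - int \<mu> \<and> c \<le> 0)"
      using H by (auto simp: algebra_simps)
    have nn: "int \<mu> * int k \<ge> 0" by simp
    from H' show ?thesis
    proof
      assume A: "Z = 1 \<and> rest = replicate k 1 @ [0] \<and> d = c + int \<mu> * int k + int \<mu> \<and> c \<ge> 1"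
      consider "c + \<Delta> > 2*int \<mu>" | "c + \<Delta> < 1" | "1 \<le> c + \<Delta> \<and> c + \<Delta> \<le> 2*int \<mu>" by linarith
      then show ?thesis
      proof cases
        case 1
        then show ?thesis using A mu r D unfolding upd_def Let_def cinv_def
          by (auto intro!: exI[of _ "k+2"] simp: algebra_simps)
      next
        case 2
        then show ?thesis using A mu r D nn unfolding upd_def Let_def cinv_def
          by (auto intro!: exI[of _ "k"] simp: algebra_simps)
      next
        case 3
        then show ?thesis using A mu r D unfolding upd_def Let_def cinv_def
          by (auto intro!: exI[of _ "Suc k"] simp: algebra_simps)
      qed
    next
      assume A: "Z = 2 \<and> rest = replicate k 2 @ [0] \<and> d = c - int \<mu> * int k - int \<mu> \<and> c \<le> 0"
      consider "c + \<Delta> < 1 - 2*int \<mu>" | "c + \<Delta> > 0" | "1 - 2*int \<mu> \<le> c + \<Delta> \<and> c + \<Delta> \<le> 0" by linarith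
      then show ?thesis
      proof cases
        case 1
        then show ?thesis using A mu r D unfolding upd_def Let_def cinv_def
          by (auto intro!: exI[of _ "k+2"] simp: algebra_simps)
      next
        case 2
        then show ?thesis using A mu r D nn unfolding upd_def Let_def cinv_def
          by (auto intro!: exI[of _ "k"] simp: algebra_simps)
      next
        case 3
        then show ?thesis using A mu r D unfolding upd_def Let_def cinv_def
          by (auto intro!: exI[of _ "Suc k"] simp: algebra_simps)
      qed
    qed
  qed
qed


definition enc :: "nat \<Rightarrow> nat \<Rightarrow> int \<Rightarrow> nat" where
  "enc \<mu> m c = 2 * nat (c + 2 * int \<mu>) + m"

definition SS :: "nat \<Rightarrow> (nat \<times> int \<times> nat \<times> nat \<times> nat \<times> nat) set" where
  "SS \<mu> = {x \<in> {..<2::nat} \<times> {1 - 2*int \<mu>..2*int \<mu>} \<times> {..\<mu>} \<times> {..\<mu>} \<times> {..2::nat} \<times> {..<2::nat}.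
     case x of (m,c,a,b,Z,m') \<Rightarrow> m \<le> m' \<and> (m' = 1 \<longrightarrow> fst (upd \<mu> c (int a - int b) Z) \<ge> 1)}"

definition tr :: "nat \<Rightarrow> nat \<times> int \<times> nat \<times> nat \<times> nat \<times> nat \<Rightarrow> (nat \<times> nat) pda_trans" where
  "tr \<mu> = (\<lambda>(m,c,a,b,Z,m'). (enc \<mu> m c, Some (a,b), Z,
      enc \<mu> m' (fst (upd \<mu> c (int a - int b) Z)), snd (upd \<mu> c (int a - int b) Z)))"

definition dl :: "nat \<Rightarrow> (nat \<times> nat) pda_trans set" where
  "dl \<mu> = tr \<mu> ` SS \<mu>"

lemma enc_inj:
  assumes "m < 2" "m' < 2" "c \<ge> - 2 * int \<mu>" "c' \<ge> - 2 * int \<mu>" "enc \<mu> m c = enc \<mu> m' c'"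
  shows "m = m' \<and> c = c'"
proof -
  have g: "\<And>k k'::nat. 2*k+m = 2*k'+m' \<Longrightarrow> m = m'" using assms(1,2) by presburger
  have "m = m'" using assms(5) unfolding enc_def by (rule g)
  then have "nat (c + 2 * int \<mu>) = nat (c' + 2 * int \<mu>)" using assms unfolding enc_def by simp
  then show ?thesis using assms \<open>m = m'\<close> by simp
qed

lemma enc_Q:
  assumes "m < 2" "1 - 2*int \<mu> \<le> c" "c \<le> 2*int \<mu>"
  shows "enc \<mu> m c < 2 * (4 * \<mu> + 1)"
proof -
  have "nat (c + 2 * int \<mu>) \<le> 4 * \<mu>" using assms by simp
  then show ?thesis using assms unfolding enc_def by simp
qed

lemma enc_odd: "m < 2 \<Longrightarrow> odd (enc \<mu> m c) \<longleftrightarrow> m = 1"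
  unfolding enc_def by (cases "m = 0") auto

lemma step_sound:
  assumes mu: "\<mu> \<ge> 1" and st: "pda_step (dl \<mu>) w (enc \<mu> m c, stk, n) (q, stk', n')"
    and m: "m < 2" and I: "cinv \<mu> c stk d"
  shows "\<exists>m' c'. q = enc \<mu> m' c' \<and> m' < 2 \<and> m \<le> m' \<and> n' = Suc n \<and> fst (w n) \<le> \<mu> \<and> snd (w n) \<le> \<mu>
     \<and> cinv \<mu> c' stk' (d + int (fst (w n)) - int (snd (w n))) \<and> (m' = 1 \<longrightarrow> c' \<ge> 1)"
proof -
  obtain Z rest \<gamma> where S: "stk = Z # rest" "stk' = \<gamma> @ rest"
    and T: "((enc \<mu> m c, None, Z, q, \<gamma>) \<in> dl \<mu> \<and> n' = n) \<or>
           ((enc \<mu> m c, Some (w n), Z, q, \<gamma>) \<in> dl \<mu> \<and> n' = Suc n)"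
    using st unfolding pda_step_def by auto
  have T2: "(enc \<mu> m c, Some (w n), Z, q, \<gamma>) \<in> dl \<mu>" "n' = Suc n"
    using T unfolding dl_def tr_def by auto
  then obtain m0 c0 a b Z0 m0' where X: "(m0,c0,a,b,Z0,m0') \<in> SS \<mu>"
    and E: "(enc \<mu> m c, Some (w n), Z, q, \<gamma>) = tr \<mu> (m0,c0,a,b,Z0,m0')"
    unfolding dl_def by auto
  have X': "m0 < 2" "1 - 2*int \<mu> \<le> c0" "c0 \<le> 2*int \<mu>" "a \<le> \<mu>" "b \<le> \<mu>" "m0' < 2" "m0 \<le> m0'"
    "m0' = 1 \<longrightarrow> fst (upd \<mu> c0 (int a - int b) Z0) \<ge> 1"
    using X unfolding SS_def by auto
  have E': "enc \<mu> m c = enc \<mu> m0 c0" "w n = (a,b)" "Z = Z0"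
     "q = enc \<mu> m0' (fst (upd \<mu> c0 (int a - int b) Z0))" "\<gamma> = snd (upd \<mu> c0 (int a - int b) Z0)"
    using E unfolding tr_def by auto
  have cr: "1 - 2*int \<mu> \<le> c" using I unfolding cinv_def by auto
  have "m = m0 \<and> c = c0" using enc_inj[OF m X'(1) _ _ E'(1)] cr X'(2) by auto
  then have mc: "m = m0" "c = c0" by auto
  have "cinv \<mu> (fst (upd \<mu> c (int a - int b) Z)) (snd (upd \<mu> c (int a - int b) Z) @ rest) (d + (int a - int b))"
    by (rule upd_cinv[OF mu]) (use I S X' in auto)
  then show ?thesis using E' X' mc S T2
    by (intro exI[of _ m0'] exI[of _ "fst (upd \<mu> c (int a - int b) Z)"]) (auto simp: algebra_simps)
qed

definition Dd :: "(nat \<Rightarrow> nat \<times> nat) \<Rightarrow> nat \<Rightarrow> int" where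
  "Dd w i = int (prefix_sum (\<lambda>i. fst (w i)) i) - int (prefix_sum (\<lambda>i. snd (w i)) i)"

lemma Dd_0: "Dd w 0 = 0" unfolding Dd_def prefix_sum_def by simp

lemma Dd_Suc: "Dd w (Suc i) = Dd w i + int (fst (w i)) - int (snd (w i))"
  unfolding Dd_def prefix_sum_def by simp

lemma Dd_pos: "Dd w i \<ge> 1 \<longleftrightarrow> \<not> prefix_sum (\<lambda>i. snd (w i)) i \<ge> prefix_sum (\<lambda>i. fst (w i)) i"
  unfolding Dd_def by auto

fun cs :: "nat \<Rightarrow> (nat \<Rightarrow> nat \<times> nat) \<Rightarrow> nat \<Rightarrow> int \<times> nat list" where
  "cs \<mu> w 0 = (0, [0])"
| "cs \<mu> w (Suc i) = (fst (upd \<mu> (fst (cs \<mu> w i)) (int (fst (w i)) - int (snd (w i))) (hd (snd (cs \<mu> w i)))),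
     snd (upd \<mu> (fst (cs \<mu> w i)) (int (fst (w i)) - int (snd (w i))) (hd (snd (cs \<mu> w i)))) @ tl (snd (cs \<mu> w i)))"

lemma cs_inv:
  assumes mu: "\<mu> \<ge> 1" and bd: "\<forall>i. fst (w i) \<le> \<mu> \<and> snd (w i) \<le> \<mu>"
  shows "cinv \<mu> (fst (cs \<mu> w i)) (snd (cs \<mu> w i)) (Dd w i)"
proof (induction i)
  case 0
  then show ?case using mu unfolding cinv_def by (auto simp: Dd_0 intro!: exI[of _ 0])
next
  case (Suc i)
  let ?c = "fst (cs \<mu> w i)" and ?s = "snd (cs \<mu> w i)"
  have ne: "?s = hd ?s # tl ?s" using cinv_ne[OF Suc] by simp
  have I: "cinv \<mu> ?c (hd ?s # tl ?s) (Dd w i)" using Suc ne by simp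
  have "\<bar>int (fst (w i)) - int (snd (w i))\<bar> \<le> int \<mu>" using bd[rule_format, of i] by (auto simp: abs_if)
  from upd_cinv[OF mu I this] show ?case by (simp add: Dd_Suc algebra_simps)
qed

lemma nat_cofinite:
  assumes "finite {i::nat. P i}" shows "\<exists>k. \<forall>i\<ge>k. \<not> P i"
proof -
  obtain k where "\<forall>n\<in>{i. P i}. n < k" using assms finite_nat_set_iff_bounded by blast
  then have "\<forall>i\<ge>k. \<not> P i" using not_le by blast
  then show ?thesis by blast
qed

lemma not_finite_tail:
  assumes "\<forall>i\<ge>(k::nat). P i" shows "infinite {i. P i}"
proof
  assume "finite {i. P i}"
  then obtain k' where "\<forall>i\<ge>k'. \<not> P i" using nat_cofinite by blast
  then show False using assms by (meson le_cases max.cobounded1 max.cobounded2)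
qed

theorem theorem20:
  fixes \<mu> :: nat
  assumes "\<mu> \<ge> 1"
  shows "omega_context_free
           {w :: nat \<Rightarrow> nat \<times> nat.
              (\<forall>i. fst (w i) \<le> \<mu> \<and> snd (w i) \<le> \<mu>) \<and>
              PLA_ge (\<lambda>i. fst (w i)) (\<lambda>i. snd (w i))}"
proof -
  note mu = assms
  define Q where "Q = {..< 2 * (4 * \<mu> + 1)}"
  define F where "F = {p \<in> Q. odd p}"
  have wf: "pda_wf Q {0,1,2} (dl \<mu>) (enc \<mu> 0 0) 0 F"
  proof -
    have "SS \<mu> \<subseteq> {..<2::nat} \<times> {1 - 2*int \<mu>..2*int \<mu>} \<times> {..\<mu>} \<times> {..\<mu>} \<times> {..2::nat} \<times> {..<2::nat}"
      unfolding SS_def by blast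
    then have "finite (SS \<mu>)" by (rule finite_subset) simp
    then have fd: "finite (dl \<mu>)" unfolding dl_def by simp
    have q0: "enc \<mu> 0 0 \<in> Q" unfolding Q_def using enc_Q[of 0 \<mu> 0] mu by simp
    have tt: "\<forall>(p, x, Z, q, \<gamma>) \<in> dl \<mu>. p \<in> Q \<and> Z \<in> {0,1,2} \<and> q \<in> Q \<and> set \<gamma> \<subseteq> {0,1,2}"
    proof
      fix t assume "t \<in> dl \<mu>"
      then obtain m c a b Z m' where X: "(m,c,a,b,Z,m') \<in> SS \<mu>" and t: "t = tr \<mu> (m,c,a,b,Z,m')"
        unfolding dl_def by auto
      have X': "m < 2" "1 - 2*int \<mu> \<le> c" "c \<le> 2*int \<mu>" "a \<le> \<mu>" "b \<le> \<mu>" "m' < 2" "Z \<le> 2"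
        using X unfolding SS_def by auto
      have D: "\<bar>int a - int b\<bar> \<le> int \<mu>" using X' by (auto simp: abs_if)
      note R = upd_range[OF mu X'(2,3) D, of Z]
      have "Z \<in> {0,1,2}" using X'(7) by auto
      then show "case t of (p, x, Z, q, \<gamma>) \<Rightarrow> p \<in> Q \<and> Z \<in> {0,1,2} \<and> q \<in> Q \<and> set \<gamma> \<subseteq> {0,1,2}"
        using t R X' enc_Q[of m \<mu> c] enc_Q[of m' \<mu> "fst (upd \<mu> c (int a - int b) Z)"]
        unfolding tr_def Q_def by auto
    qed
    show ?thesis unfolding pda_wf_def using fd q0 tt by (auto simp: Q_def F_def)
  qed
  have lang: "{w :: nat \<Rightarrow> nat \<times> nat. (\<forall>i. fst (w i) \<le> \<mu> \<and> snd (w i) \<le> \<mu>) \<and>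
              PLA_ge (\<lambda>i. fst (w i)) (\<lambda>i. snd (w i))} = {w. pda_buchi_accepts (dl \<mu>) (enc \<mu> 0 0) 0 F w}"
  proof (intro set_eqI iffI; simp only: mem_Collect_eq)
    fix w :: "nat \<Rightarrow> nat \<times> nat"
    assume "(\<forall>i. fst (w i) \<le> \<mu> \<and> snd (w i) \<le> \<mu>) \<and> PLA_ge (\<lambda>i. fst (w i)) (\<lambda>i. snd (w i))"
    then have bd: "\<forall>i. fst (w i) \<le> \<mu> \<and> snd (w i) \<le> \<mu>" and pla: "PLA_ge (\<lambda>i. fst (w i)) (\<lambda>i. snd (w i))"
      by auto
    obtain k where k: "\<forall>i\<ge>k. Dd w i \<ge> 1"
      using nat_cofinite[of "\<lambda>i. prefix_sum (\<lambda>i. snd (w i)) i \<ge> prefix_sum (\<lambda>i. fst (w i)) i"] pla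
      unfolding PLA_ge_def Dd_pos by auto
    define N where "N = Suc k"
    define md where "md i = (if N \<le> i then 1 else (0::nat))" for i
    define r where "r i = (enc \<mu> (md i) (fst (cs \<mu> w i)), snd (cs \<mu> w i), i)" for i
    have r0: "r 0 = (enc \<mu> 0 0, [0], 0)" unfolding r_def md_def N_def by simp
    have steps: "pda_step (dl \<mu>) w (r i) (r (Suc i))" for i
    proof -
      let ?c = "fst (cs \<mu> w i)" and ?s = "snd (cs \<mu> w i)" and ?D = "int (fst (w i)) - int (snd (w i))"
      have I: "cinv \<mu> ?c ?s (Dd w i)" by (rule cs_inv[OF mu bd])
      have I2: "cinv \<mu> (fst (cs \<mu> w (Suc i))) (snd (cs \<mu> w (Suc i))) (Dd w (Suc i))" by (rule cs_inv[OF mu bd])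
      have ne: "?s = hd ?s # tl ?s" "hd ?s \<in> {0,1,2}" using cinv_ne[OF I] by auto
      have cr: "1 - 2*int \<mu> \<le> ?c" "?c \<le> 2*int \<mu>" using I unfolding cinv_def by auto
      have pos: "md (Suc i) = 1 \<longrightarrow> fst (upd \<mu> ?c ?D (hd ?s)) \<ge> 1"
      proof
        assume "md (Suc i) = 1"
        then have "Suc i \<ge> k" unfolding md_def N_def by (auto split: if_splits)
        then have "Dd w (Suc i) \<ge> 1" using k by blast
        then show "fst (upd \<mu> ?c ?D (hd ?s)) \<ge> 1" using cinv_pos[OF I2] by simp
      qed
      have mem: "(md i, ?c, fst (w i), snd (w i), hd ?s, md (Suc i)) \<in> SS \<mu>"
        unfolding SS_def using bd cr ne(2) pos by (auto simp: md_def)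
      have "(enc \<mu> (md i) ?c, Some (w i), hd ?s, enc \<mu> (md (Suc i)) (fst (cs \<mu> w (Suc i))),
              snd (upd \<mu> ?c ?D (hd ?s))) \<in> dl \<mu>"
        unfolding dl_def by (rule image_eqI[OF _ mem]) (simp add: tr_def prod_eq_iff)
      then show ?thesis unfolding pda_step_def r_def prod.case
        by (intro exI[of _ "hd ?s"] exI[of _ "tl ?s"] exI[of _ "snd (upd \<mu> ?c ?D (hd ?s))"])
           (use ne(1) in auto)
    qed
    have prog: "\<forall>m. \<exists>i. snd (snd (r i)) \<ge> m" unfolding r_def by auto
    have "\<forall>i\<ge>N. fst (r i) \<in> F"
    proof (intro allI impI)
      fix i assume "N \<le> i"
      have I: "cinv \<mu> (fst (cs \<mu> w i)) (snd (cs \<mu> w i)) (Dd w i)" by (rule cs_inv[OF mu bd])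
      then have cr: "1 - 2*int \<mu> \<le> fst (cs \<mu> w i)" "fst (cs \<mu> w i) \<le> 2*int \<mu>" unfolding cinv_def by auto
      show "fst (r i) \<in> F" unfolding r_def F_def Q_def using \<open>N \<le> i\<close> enc_Q[OF _ cr, of 1] enc_odd[of 1]
        by (simp add: md_def)
    qed
    then have "infinite {i. fst (r i) \<in> F}" by (rule not_finite_tail)
    then show "pda_buchi_accepts (dl \<mu>) (enc \<mu> 0 0) 0 F w"
      unfolding pda_buchi_accepts_def using r0 steps prog by blast
  next
    fix w :: "nat \<Rightarrow> nat \<times> nat"
    assume "pda_buchi_accepts (dl \<mu>) (enc \<mu> 0 0) 0 F w"
    then obtain r where r0: "r 0 = (enc \<mu> 0 0, [0], 0)" and st: "\<forall>i. pda_step (dl \<mu>) w (r i) (r (Suc i))"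
      and inf: "infinite {i. fst (r i) \<in> F}"
      unfolding pda_buchi_accepts_def by blast
    define G where "G i m c \<longleftrightarrow> fst (r i) = enc \<mu> m c \<and> m < 2 \<and> snd (snd (r i)) = i \<and>
        cinv \<mu> c (fst (snd (r i))) (Dd w i) \<and> (m = 1 \<longrightarrow> c \<ge> 1)" for i m c
    have key: "\<exists>m' c'. G (Suc i) m' c' \<and> m \<le> m' \<and> fst (w i) \<le> \<mu> \<and> snd (w i) \<le> \<mu>"
      if "G i m c" for i m c
    proof -
      have ri: "r i = (enc \<mu> m c, fst (snd (r i)), i)" using that unfolding G_def by (simp add: prod_eq_iff)
      have rs: "r (Suc i) = (fst (r (Suc i)), fst (snd (r (Suc i))), snd (snd (r (Suc i))))" by simp
      have "pda_step (dl \<mu>) w (enc \<mu> m c, fst (snd (r i)), i) (fst (r (Suc i)), fst (snd (r (Suc i))), snd (snd (r (Suc i))))"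
        using st[rule_format, of i] ri rs by metis
      from step_sound[OF mu this] that obtain m' c' where
        "fst (r (Suc i)) = enc \<mu> m' c' \<and> m' < 2 \<and> m \<le> m' \<and> snd (snd (r (Suc i))) = Suc i \<and>
         fst (w i) \<le> \<mu> \<and> snd (w i) \<le> \<mu> \<and>
         cinv \<mu> c' (fst (snd (r (Suc i)))) (Dd w i + int (fst (w i)) - int (snd (w i))) \<and> (m' = 1 \<longrightarrow> 1 \<le> c')"
        unfolding G_def by blast
      then show ?thesis unfolding G_def by (auto simp: Dd_Suc)
    qed
    have G_all: "\<exists>m c. G i m c" for i
    proof (induction i)
      case 0
      have "G 0 0 0" unfolding G_def using r0 mu by (auto simp: Dd_0 cinv_def intro!: exI[of _ 0])
      then show ?case by blast
    next
      case (Suc i)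
      then show ?case using key by blast
    qed
    have bd: "\<forall>i. fst (w i) \<le> \<mu> \<and> snd (w i) \<le> \<mu>" using G_all key by blast
    obtain i0 where i0: "fst (r i0) \<in> F" using inf by (metis (mono_tags) empty_Collect_eq finite.emptyI)
    have tail: "\<exists>c. G (i0 + j) 1 c" for j
    proof (induction j)
      case 0
      obtain m c where g: "G i0 m c" using G_all by blast
      then have "m = 1" using i0 enc_odd[of m \<mu> c] unfolding G_def F_def by auto
      then show ?case using g by auto
    next
      case (Suc j)
      then obtain c where "G (i0 + j) 1 c" by blast
      from key[OF this] obtain m' c' where "G (Suc (i0 + j)) m' c'" "1 \<le> m'" by blast
      moreover then have "m' = 1" unfolding G_def by auto
      ultimately show ?case by auto
    qed
    have pos: "\<forall>i\<ge>i0. Dd w i \<ge> 1"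
    proof (intro allI impI)
      fix i assume "i0 \<le> i"
      then obtain j where "i = i0 + j" using le_Suc_ex by blast
      then obtain c where "G i 1 c" using tail by blast
      then show "Dd w i \<ge> 1" using cinv_pos unfolding G_def by blast
    qed
    have f1: "finite {i. prefix_sum (\<lambda>i. snd (w i)) i \<ge> prefix_sum (\<lambda>i. fst (w i)) i}"
    proof (rule finite_subset[of _ "{..<i0}"])
      show "{i. prefix_sum (\<lambda>i. snd (w i)) i \<ge> prefix_sum (\<lambda>i. fst (w i)) i} \<subseteq> {..<i0}"
        using pos Dd_pos by (auto simp: not_le[symmetric])
    qed simp
    have f2: "infinite {i. prefix_sum (\<lambda>i. fst (w i)) i > prefix_sum (\<lambda>i. snd (w i)) i}"
      by (rule not_finite_tail[of i0]) (use pos Dd_pos in \<open>auto simp: not_le\<close>)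
    show "(\<forall>i. fst (w i) \<le> \<mu> \<and> snd (w i) \<le> \<mu>) \<and> PLA_ge (\<lambda>i. fst (w i)) (\<lambda>i. snd (w i))"
      using bd f1 f2 unfolding PLA_ge_def by blast
  qed
  show ?thesis unfolding omega_context_free_def using wf lang by blast
qed

end
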